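(* There exist absolute constants $c>0$ and $\delta_0>0$ such that the following holds: if $\delta\in(0,\delta_0]$, $r\in\mathbb{N}$, and $q$ is a univariate sum-of-squares polynomial of degree $r$ with $\|(1-x^2)-q\|_{1,\mathrm{cheb}}\le\delta$, then $r\ge c/\sqrt\delta$. That is, $r=\Omega(1/\sqrt\delta)$.
   Context: $T_k(x)=\cos(k\arccos x)$ is the Chebyshev polynomial of the first kind; for a univariate polynomial $p=\sum_kc_kT_k$, $\|p\|_{1,\mathrm{cheb}}=\sum_k|c_k|$. *)

theory Defs
  imports "HOL-Computational_Algebra.Polynomial"
begin

text \<open>Chebyshev polynomials of the first kind, T_0 = 1, T_1 = x,
  T_(n+2) = 2 x T_(n+1) - T_n (so that T_k(cos t) = cos(k t)).\<close>
fun cheb_T :: "nat \<Rightarrow> real poly" where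
  "cheb_T 0 = 1"
| "cheb_T (Suc 0) = [:0, 1:]"
| "cheb_T (Suc (Suc n)) = [:0, 2:] * cheb_T (Suc n) - cheb_T n"

definition cheb_coeffs :: "real poly \<Rightarrow> nat \<Rightarrow> real" where
  "cheb_coeffs p = (THE c. (\<forall>k > degree p. c k = 0) \<and>
      p = (\<Sum>k\<le>degree p. smult (c k) (cheb_T k)))"

definition cheb_norm1 :: "real poly \<Rightarrow> real" where
  "cheb_norm1 p = (\<Sum>k\<le>degree p. \<bar>cheb_coeffs p k\<bar>)"

definition is_sos_poly :: "real poly \<Rightarrow> bool" where
  "is_sos_poly q \<longleftrightarrow> (\<exists>fs :: real poly list. q = sum_list (map (\<lambda>f. f * f) fs))"

end

theory Submission
  imports Defs
begin

lemma cheb_T_deg: "degree (cheb_T k) = k \<and> coeff (cheb_T k) k = (if k = 0 then 1 else 2 ^ (k - 1))"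
proof (induction k rule: cheb_T.induct)
  case 1 then show ?case by simp
next
  case 2 then show ?case by simp
next
  case (3 n)
  have nz: "cheb_T (Suc n) \<noteq> 0" using 3 by (metis degree_0 nat.distinct(1))
  have d1: "degree ([:0, 2:] * cheb_T (Suc n)) = Suc (Suc n)"
    using 3 nz by (simp add: degree_mult_eq)
  have c1: "coeff ([:0, 2:] * cheb_T (Suc n)) (Suc (Suc n)) = 2 ^ (Suc n)"
    using 3 by simp
  have "degree (cheb_T n) < Suc (Suc n)" using 3 by simp
  then have "degree ([:0, 2:] * cheb_T (Suc n) - cheb_T n) = Suc (Suc n)"
    using d1 by (metis degree_add_eq_left diff_conv_add_uminus degree_minus)
  moreover have "coeff (cheb_T n) (Suc (Suc n)) = 0" using 3 by (simp add: coeff_eq_0)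
  ultimately show ?case using c1 by simp
qed

lemma cheb_T_degree[simp]: "degree (cheb_T k) = k" using cheb_T_deg by blast
lemma cheb_T_lead_nz: "coeff (cheb_T k) k \<noteq> 0" using cheb_T_deg[of k] by simp

lemma cheb_indep:
  "(\<Sum>k\<le>n. smult (e k) (cheb_T k)) = 0 \<Longrightarrow> \<forall>k\<le>n. e k = 0"
proof (induction n)
  case 0 then show ?case by simp
next
  case (Suc n)
  let ?S = "\<Sum>k\<le>n. smult (e k) (cheb_T k)"
  have dS: "degree ?S \<le> n"
    by (rule degree_sum_le) (auto intro: order.trans[OF degree_smult_le])
  have "?S + smult (e (Suc n)) (cheb_T (Suc n)) = 0" using Suc.prems by simp
  then have "coeff (?S + smult (e (Suc n)) (cheb_T (Suc n))) (Suc n) = 0" by simp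
  moreover have "coeff ?S (Suc n) = 0" using dS by (simp add: coeff_eq_0)
  ultimately have "e (Suc n) * coeff (cheb_T (Suc n)) (Suc n) = 0" by simp
  then have e: "e (Suc n) = 0" using cheb_T_lead_nz by simp
  then have "?S = 0" using Suc.prems by simp
  then show ?case using Suc.IH e le_Suc_eq by auto
qed

lemma cheb_exists:
  "degree p \<le> n \<Longrightarrow> \<exists>c. (\<forall>k > degree p. c k = 0) \<and> p = (\<Sum>k\<le>n. smult (c k) (cheb_T k))"
proof (induction n arbitrary: p)
  case 0
  then obtain a where p: "p = [:a:]" by (metis degree_eq_zeroE le_zero_eq)
  show ?case by (rule exI[of _ "\<lambda>k. if k = 0 then a else 0"]) (use 0 p in auto)
next
  case (Suc n)
  show ?case
  proof (cases "degree p \<le> n")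
    case True
    then obtain c where c: "\<forall>k > degree p. c k = 0" "p = (\<Sum>k\<le>n. smult (c k) (cheb_T k))"
      using Suc.IH by blast
    have "c (Suc n) = 0" using c True by simp
    then show ?thesis using c by (intro exI[of _ c]) simp
  next
    case False
    then have dp: "degree p = Suc n" using Suc.prems by simp
    define \<alpha> where "\<alpha> = lead_coeff p / coeff (cheb_T (Suc n)) (Suc n)"
    define p' where "p' = p - smult \<alpha> (cheb_T (Suc n))"
    have cz: "coeff p' (Suc n) = 0" using cheb_T_lead_nz[of "Suc n"] dp
      by (simp add: p'_def \<alpha>_def)
    have dl: "degree p' \<le> Suc n" unfolding p'_def using dp
      by (intro degree_diff_le) (auto intro: order.trans[OF degree_smult_le])
    have dp': "degree p' \<le> n"
    proof (cases "p' = 0")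
      case False
      then have "lead_coeff p' \<noteq> 0" by simp
      then show ?thesis using cz dl by (metis le_SucE less_Suc_eq_le)
    qed simp
    then obtain c where c: "\<forall>k > degree p'. c k = 0" "p' = (\<Sum>k\<le>n. smult (c k) (cheb_T k))"
      using Suc.IH by blast
    show ?thesis
    proof (intro exI[of _ "c(Suc n := \<alpha>)"] conjI allI impI)
      fix k assume "degree p < k" then show "(c(Suc n := \<alpha>)) k = 0" using c dp dp' by auto
    next
      have "(\<Sum>k\<le>Suc n. smult ((c(Suc n := \<alpha>)) k) (cheb_T k))
          = (\<Sum>k\<le>n. smult (c k) (cheb_T k)) + smult \<alpha> (cheb_T (Suc n))"
        by (simp add: sum.atMost_Suc)
      also have "\<dots> = p" using c by (simp add: p'_def)
      finally show "p = (\<Sum>k\<le>Suc n. smult ((c(Suc n := \<alpha>)) k) (cheb_T k))" by simp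
    qed
  qed
qed

lemma cheb_coeffs_prop:
  "p = (\<Sum>k\<le>degree p. smult (cheb_coeffs p k) (cheb_T k))"
proof -
  let ?P = "\<lambda>c. (\<forall>k > degree p. c k = 0) \<and> p = (\<Sum>k\<le>degree p. smult (c k) (cheb_T k))"
  have "\<exists>!c. ?P c"
  proof (rule ex_ex1I)
    show "\<exists>c. ?P c" using cheb_exists by blast
  next
    fix c d assume c: "?P c" and d: "?P d"
    have "(\<Sum>k\<le>degree p. smult (c k - d k) (cheb_T k))
       = (\<Sum>k\<le>degree p. smult (c k) (cheb_T k)) - (\<Sum>k\<le>degree p. smult (d k) (cheb_T k))"
      by (simp add: smult_diff_left sum_subtractf)
    also have "\<dots> = 0" using c d by simp
    finally have "\<forall>k\<le>degree p. c k - d k = 0" by (rule cheb_indep)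
    then show "c = d" using c d by (metis eq_iff_diff_eq_0 ext not_le)
  qed
  then have "?P (cheb_coeffs p)" unfolding cheb_coeffs_def by (rule theI')
  then show ?thesis by blast
qed

lemma cheb_alg: "(a + b) * ((a ^ Suc n + b ^ Suc n) / 2) - (a ^ n + b ^ n) / 2
   = (a ^ Suc (Suc n) + b ^ Suc (Suc n)) / 2 + (a * b) * (a ^ n + b ^ n) / 2 - (a ^ n + b ^ n) / (2::real)"
  by (simp add: power_Suc field_simps)

lemma cheb_T_eval:
  assumes "a > 0" "a + inverse a = 2 * x"
  shows "poly (cheb_T k) x = (a ^ k + inverse a ^ k) / 2"
proof (induction k rule: cheb_T.induct)
  case 1 then show ?case by simp
next
  case 2 then show ?case using assms by simp
next
  case (3 n)
  have ab: "a * inverse a = 1" using assms by simp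
  have "poly (cheb_T (Suc (Suc n))) x = 2 * x * poly (cheb_T (Suc n)) x - poly (cheb_T n) x"
    by simp
  also have "\<dots> = (a + inverse a) * ((a ^ Suc n + inverse a ^ Suc n) / 2) - (a ^ n + inverse a ^ n) / 2"
    by (simp only: 3 assms(2))
  also have "\<dots> = (a ^ Suc (Suc n) + inverse a ^ Suc (Suc n)) / 2
       + (a * inverse a) * (a ^ n + inverse a ^ n) / 2 - (a ^ n + inverse a ^ n) / 2"
    using cheb_alg[of a "inverse a" n] by simp
  also have "\<dots> = (a ^ Suc (Suc n) + inverse a ^ Suc (Suc n)) / 2" using ab by simp
  finally show ?case .
qed

lemma cheb_T_bound:
  assumes "x \<ge> 1"
  shows "\<bar>poly (cheb_T k) x\<bar> \<le> (x + sqrt (x^2 - 1)) ^ k"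
proof -
  define a where "a = x + sqrt (x^2 - 1)"
  have s: "sqrt (x^2 - 1) ^ 2 = x^2 - 1" using assms by (simp add: one_le_power)
  have s0: "sqrt (x^2 - 1) \<ge> 0" using assms by (simp add: one_le_power)
  have a1: "a \<ge> 1" using assms s0 unfolding a_def by linarith
  have "a * (x - sqrt (x^2 - 1)) = 1" using s by (simp add: a_def algebra_simps power2_eq_square)
  then have ia: "inverse a = x - sqrt (x^2 - 1)" using a1
    by (metis inverse_unique)
  have "a + inverse a = 2 * x" using ia by (simp add: a_def)
  then have e: "poly (cheb_T k) x = (a ^ k + inverse a ^ k) / 2"
    using a1 by (intro cheb_T_eval) auto
  have "sqrt (x^2-1) < sqrt (x^2)" by (rule real_sqrt_less_mono) simp
  then have sx: "sqrt (x^2-1) < x" using assms by simp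
  have "inverse a \<le> a" "inverse a > 0" using sx a1 ia s0 by (auto simp: a_def)
  then have "inverse a ^ k \<le> a ^ k" by (simp add: power_mono)
  moreover have "0 < inverse a ^ k" using \<open>inverse a > 0\<close> by simp
  ultimately have "0 \<le> (a ^ k + inverse a ^ k) / 2" "(a ^ k + inverse a ^ k) / 2 \<le> a ^ k"
    by simp_all
  then have "\<bar>poly (cheb_T k) x\<bar> \<le> a ^ k" unfolding e by simp
  then show ?thesis by (simp add: a_def)
qed

lemma sos_nonneg: "is_sos_poly q \<Longrightarrow> poly q x \<ge> (0::real)"
proof -
  have "poly (sum_list (map (\<lambda>f. f * f) fs)) x \<ge> 0" for fs :: "real poly list"
    by (induction fs) auto
  then show "is_sos_poly q \<Longrightarrow> poly q x \<ge> 0" unfolding is_sos_poly_def by auto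
qed

lemma poly_cheb_bound:
  assumes "degree p \<le> n" "x \<ge> 1" "(x + sqrt (x^2 - 1)) ^ n \<le> M"
  shows "\<bar>poly p x\<bar> \<le> M * cheb_norm1 p"
proof -
  define a where "a = x + sqrt (x^2 - 1)"
  have s0: "sqrt (x^2 - 1) \<ge> 0" using assms by (simp add: one_le_power)
  have a1: "a \<ge> 1" using assms s0 unfolding a_def by linarith
  have "poly p x = (\<Sum>k\<le>degree p. cheb_coeffs p k * poly (cheb_T k) x)"
    by (subst cheb_coeffs_prop) (simp add: poly_sum)
  then have "\<bar>poly p x\<bar> \<le> (\<Sum>k\<le>degree p. \<bar>cheb_coeffs p k * poly (cheb_T k) x\<bar>)"
    by (simp add: sum_abs)
  also have "\<dots> \<le> (\<Sum>k\<le>degree p. \<bar>cheb_coeffs p k\<bar> * M)"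
  proof (rule sum_mono)
    fix k assume "k \<in> {..degree p}"
    then have "k \<le> n" using assms by simp
    have "\<bar>poly (cheb_T k) x\<bar> \<le> a ^ k" using cheb_T_bound[OF assms(2)] by (simp add: a_def)
    also have "\<dots> \<le> a ^ n" using a1 \<open>k \<le> n\<close> by (intro power_increasing)
    also have "\<dots> \<le> M" using assms by (simp add: a_def)
    finally show "\<bar>cheb_coeffs p k * poly (cheb_T k) x\<bar> \<le> \<bar>cheb_coeffs p k\<bar> * M"
      by (simp add: abs_mult mult_left_mono)
  qed
  also have "\<dots> = M * cheb_norm1 p" by (simp add: cheb_norm1_def sum_distrib_left mult.commute)
  finally show ?thesis .
qed

theorem theorem10:
  shows "\<exists>c::real > 0. \<exists>\<delta>0::real > 0. \<forall>(\<delta>::real) (r::nat) (q::real poly).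
     0 < \<delta> \<and> \<delta> \<le> \<delta>0 \<and> is_sos_poly q \<and> degree q = r \<and>
     cheb_norm1 ([:1, 0, -1:] - q) \<le> \<delta> \<longrightarrow> real r \<ge> c / sqrt \<delta>"
proof -
  define M :: real where "M = exp 3"
  define K where "K = sqrt (2 / M)"
  have M0: "M > 0" by (simp add: M_def)
  have K0: "K > 0" using M0 by (simp add: K_def)
  have K2: "K^2 = 2 / M" using M0 by (simp add: K_def)
  show ?thesis
  proof (rule exI[of _ "K/2"], rule conjI)
    show "K/2 > 0" using K0 by auto
  next
  show "\<exists>\<delta>0::real > 0. \<forall>(\<delta>::real) (r::nat) (q::real poly).
     0 < \<delta> \<and> \<delta> \<le> \<delta>0 \<and> is_sos_poly q \<and> degree q = r \<and>
     cheb_norm1 ([:1, 0, -1:] - q) \<le> \<delta> \<longrightarrow> real r \<ge> K/2 / sqrt \<delta>"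
  proof (rule exI[of _ "K^2/16"], rule conjI)
    show "K^2/16 > 0" using K0 by auto
  next
  show "\<forall>(\<delta>::real) (r::nat) (q::real poly).
     0 < \<delta> \<and> \<delta> \<le> K^2/16 \<and> is_sos_poly q \<and> degree q = r \<and>
     cheb_norm1 ([:1, 0, -1:] - q) \<le> \<delta> \<longrightarrow> real r \<ge> K/2 / sqrt \<delta>"
  proof (intro allI impI)
    fix \<delta> :: real and r :: nat and q :: "real poly"
    assume H: "0 < \<delta> \<and> \<delta> \<le> K\<^sup>2 / 16 \<and> is_sos_poly q \<and> degree q = r \<and>
         cheb_norm1 ([:1, 0, -1:] - q) \<le> \<delta>"
    define p where "p = [:1, 0, -1:] - q"
    define n where "n = r + 2"
    define h :: real where "h = 1 / (real n)^2"
    define x where "x = 1 + h"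
    have n2: "real n \<ge> 2" by (simp add: n_def)
    have h0: "h > 0" using n2 by (simp add: h_def)
    have hn: "h \<le> 1 / real n" using n2 by (simp add: h_def power2_eq_square field_simps)
    have "1 / real n \<le> 1" using n2 by simp
    then have h1: "h \<le> 1" using hn by linarith
    have dp: "degree p \<le> n" unfolding p_def n_def using H
      by (intro degree_diff_le) (auto simp: degree_pCons_eq_if)
    have x1: "x \<ge> 1" using h0 by (simp add: x_def)
    have "x^2 - 1 = 2*h + h^2" by (simp add: x_def power2_eq_square algebra_simps)
    also have "\<dots> \<le> 4 * h" using h0 h1 by (simp add: power2_eq_square mult_left_le)
    also have "\<dots> = (2 / real n)^2" by (simp add: h_def power2_eq_square)
    finally have "sqrt (x^2 - 1) \<le> sqrt ((2 / real n)^2)" by (rule real_sqrt_le_mono)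
    then have sq: "sqrt (x^2 - 1) \<le> 2 / real n" using n2 by simp
    have "x + sqrt (x^2 - 1) \<le> 1 + 3 / real n" using sq hn by (simp add: x_def)
    also have "\<dots> \<le> exp (3 / real n)" by (rule exp_ge_add_one_self)
    finally have "(x + sqrt (x^2 - 1)) ^ n \<le> exp (3 / real n) ^ n"
      using x1 sq by (intro power_mono) (auto intro: add_nonneg_nonneg)
    also have "\<dots> = M" using n2 by (simp add: M_def flip: exp_of_nat_mult)
    finally have aM: "(x + sqrt (x^2 - 1)) ^ n \<le> M" .
    have "\<bar>poly p x\<bar> \<le> M * cheb_norm1 p" by (rule poly_cheb_bound[OF dp x1 aM])
    also have "\<dots> \<le> M * \<delta>" using H M0 by (simp add: p_def)
    finally have pb: "\<bar>poly p x\<bar> \<le> M * \<delta>" .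
    have "poly q x \<ge> 0" using H sos_nonneg by blast
    moreover have "poly p x = 1 - x^2 - poly q x" by (simp add: p_def power2_eq_square)
    ultimately have "x^2 - 1 \<le> M * \<delta>" using pb by linarith
    moreover have "x^2 - 1 = 2*h + h^2" by (simp add: x_def power2_eq_square algebra_simps)
    ultimately have "2 * h \<le> M * \<delta>" using h0 by (smt (verit) zero_le_power2)
    then have "2 / M \<le> (real n)^2 * \<delta>" using M0 n2 by (simp add: h_def field_simps)
    then have "K^2 \<le> (real n * sqrt \<delta>)^2" using H K2 by (simp add: power_mult_distrib)
    then have Kn: "K \<le> real n * sqrt \<delta>" using H
      by (meson power2_le_imp_le mult_nonneg_nonneg of_nat_0_le_iff real_sqrt_ge_zero less_imp_le)
    have s0: "sqrt \<delta> > 0" using H by simp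
    have "sqrt \<delta> \<le> sqrt (K^2/16)" using H by (simp add: real_sqrt_le_mono)
    also have "sqrt (K^2/16) = K / 4" using K0 by (simp add: real_sqrt_divide)
    finally have sK: "sqrt \<delta> \<le> K / 4" .
    have "K / sqrt \<delta> \<le> real n" using Kn s0 by (simp add: field_simps)
    moreover have "4 \<le> K / sqrt \<delta>" using sK s0 by (simp add: field_simps)
    ultimately show "K / 2 / sqrt \<delta> \<le> real r" by (simp add: n_def field_simps)
  qed
  qed
  qed
qed

end
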